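(* Let $\alpha=a/q+\beta$ with $a\in\mathbb{Z}$, $q\in\mathbb{N}$, $(a,q)=1$ and $|\beta|<1/q^2$. For $X\ge 2$, \[ \sum_{n\le X}\mu^2(n)\operatorname{e}(\alpha n^2)\ll \frac{X}{q^{1/4}}+X^{1/2}\log X(\log q)^{1/2}+X^{1/2}q^{1/4}(\log q)^{1/4}. \]
   Context: $\operatorname{e}(x)=\exp(2\pi i x)$; $\mu$ is the Möbius function. $\ll$ denotes an inequality up to an absolute constant. *)

theory Defs
  imports "HOL-Analysis.Analysis" "HOL-Computational_Algebra.Squarefree"
begin

definition e :: "real \<Rightarrow> complex" where
  "e x = exp (2 * of_real pi * \<i> * of_real x)"

text \<open>Moebius function on positive integers (value 0 at 0 by convention, never used).\<close>
definition moebius_mu :: "nat \<Rightarrow> int" where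
  "moebius_mu n = (if n = 0 then 0 else if squarefree n then (-1) ^ card (prime_factors n) else 0)"

end

theory Submission
  imports Defs "HOL-Analysis.Kronecker_Approximation_Theorem"
begin

definition nd :: "real \<Rightarrow> real" where "nd x = \<bar>x - of_int (round x)\<bar>"

lemma nd_nonneg: "nd x \<ge> 0" by (simp add: nd_def)

lemma nd_le_int: "nd x \<le> \<bar>x - of_int m\<bar>"
  unfolding nd_def by (rule round_diff_minimal)

lemma nd_le_half: "nd x \<le> 1/2"
  unfolding nd_def using of_int_round_ge[of x] of_int_round_le[of x] by linarith

lemma nd_shift: "nd (x + of_int z) = nd x"
proof -
  have "nd (x + of_int z) \<le> nd x"
    using nd_le_int[of "x + of_int z" "round x + z"] by (simp add: nd_def algebra_simps)
  moreover have "nd x \<le> nd (x + of_int z)"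
    using nd_le_int[of x "round (x + of_int z) - z"] by (simp add: nd_def algebra_simps)
  ultimately show ?thesis by linarith
qed

lemma nd_perturb: "nd (x + y) \<ge> nd x - \<bar>y\<bar>"
proof -
  have "nd x \<le> \<bar>x - of_int (round (x+y))\<bar>" by (rule nd_le_int)
  also have "\<dots> \<le> \<bar>x + y - of_int (round (x+y))\<bar> + \<bar>y\<bar>" by linarith
  finally show ?thesis by (simp add: nd_def)
qed

lemma nd_unit: assumes "0 \<le> x" "x < 1" shows "nd x \<ge> min x (1 - x)"
proof -
  have a: "of_int (round x) > (-1::real)" "of_int (round x) < (2::real)"
    using of_int_round_ge[of x] of_int_round_le[of x] assms by linarith+
  have "round x > -1" "round x < 2"
    using a by (metis of_int_less_iff of_int_minus of_int_1, metis of_int_less_iff of_int_numeral)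
  hence "round x = 0 \<or> round x = 1" by linarith
  then show ?thesis unfolding nd_def by auto
qed

lemma nd_minus: "nd (- x) = nd x"
proof -
  have "nd (-x) \<le> nd x" using nd_le_int[of "-x" "- round x"] by (simp add: nd_def)
  moreover have "nd x \<le> nd (-x)" using nd_le_int[of "x" "- round (-x)"] by (simp add: nd_def)
  ultimately show ?thesis by linarith
qed

lemma e_cis: "e x = cis (2 * pi * x)"
  unfolding e_def by (simp add: cis_conv_exp algebra_simps)

lemma e_int [simp]: "e (of_int k) = 1"
  by (simp add: e_cis)

lemma e_cnj: "e x * cnj (e y) = e (x - y)"
  by (simp add: e_cis cis_cnj cis_mult algebra_simps)

lemma e_add: "e (x + y) = e x * e y"
  by (simp add: e_def algebra_simps exp_add[symmetric])

lemma norm_e [simp]: "norm (e x) = 1"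
  unfolding e_def by (simp add: norm_exp_eq_Re)

lemma e_mult_nat: "e (x * of_nat n) = e x ^ n"
  unfolding e_def by (simp add: exp_of_nat_mult[symmetric] algebra_simps)

lemma norm_cis_minus_1: "norm (cis t - 1) = 2 * \<bar>sin (t/2)\<bar>"
proof -
  have "(norm (cis t - 1))^2 = (cos t - 1)^2 + (sin t)^2"
    by (simp add: cmod_def)
  also have "\<dots> = 2 - 2 * cos t" using sin_cos_squared_add[of t] by (simp add: power2_eq_square algebra_simps)
  also have "\<dots> = (2 * \<bar>sin (t/2)\<bar>)^2"
    using cos_double_sin[of "t/2"] by (simp add: power2_eq_square algebra_simps)
  finally show ?thesis
    by (metis abs_norm_cancel power2_eq_iff_nonneg abs_ge_zero mult_nonneg_nonneg zero_le_numeral norm_ge_zero)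
qed

lemma jordan: assumes "0 \<le> y" "y \<le> pi/2" shows "sin y \<ge> (2/pi) * y"
proof -
  have conc: "concave_on {0..pi} sin"
    by (rule f''_le0_imp_concave[where f'=cos and f''="\<lambda>x. - sin x"])
       (auto intro!: derivative_eq_intros sin_ge_zero)
  define t where "t = (2/pi) * y"
  have t01: "0 \<le> t" "t \<le> 1" using assms pi_gt_zero unfolding t_def by (auto simp: field_simps)
  have "(1 - t) * sin 0 + t * sin (pi/2) \<le> sin ((1 - t) * 0 + t * (pi/2))"
    using concave_onD[OF conc, of t 0 "pi/2"] t01 pi_gt_zero by auto
  moreover have "t * (pi/2) = y" unfolding t_def by simp
  ultimately show ?thesis unfolding t_def by simp
qed

lemma norm_e_minus_1: "norm (e x - 1) \<ge> 4 * nd x"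
proof -
  define y where "y = x - of_int (round x)"
  have ex: "e x = e y" using e_add[of y "of_int (round x)"] by (simp add: y_def)
  have ny: "nd x = \<bar>y\<bar>" by (simp add: nd_def y_def)
  have yb: "\<bar>y\<bar> \<le> 1/2" using nd_le_half[of x] ny by simp
  have "norm (e y - 1) = 2 * \<bar>sin (pi * y)\<bar>"
    by (simp add: e_cis norm_cis_minus_1)
  also have "\<bar>sin (pi * y)\<bar> = sin (pi * \<bar>y\<bar>)"
  proof -
    have "\<bar>sin (pi * y)\<bar> = \<bar>sin (pi * \<bar>y\<bar>)\<bar>"
      by (cases "y \<ge> 0") (simp_all add: abs_if)
    moreover have "sin (pi * \<bar>y\<bar>) \<ge> 0"
      using yb pi_gt_zero by (intro sin_ge_zero) auto
    ultimately show ?thesis by simp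
  qed
  finally have eqn: "norm (e y - 1) = 2 * sin (pi * \<bar>y\<bar>)" .
  have "sin (pi * \<bar>y\<bar>) \<ge> (2/pi) * (pi * \<bar>y\<bar>)"
    using jordan[of "pi * \<bar>y\<bar>"] yb pi_gt_zero by (auto simp: field_simps)
  thus ?thesis using ex ny pi_gt_zero eqn by simp
qed

lemma geom_bound:
  assumes "nd \<theta> > 0"
  shows "norm (\<Sum>n\<in>{1..K}. e (\<theta> * of_nat n)) \<le> 1 / (2 * nd \<theta>)"
proof -
  define z where "z = e \<theta>"
  have nz: "norm (z - 1) \<ge> 4 * nd \<theta>" using norm_e_minus_1 z_def by simp
  hence z1: "z \<noteq> 1" using assms by auto
  have "(1 - z) * (\<Sum>n\<in>{1..K}. z ^ n) = z ^ 1 - z ^ Suc K"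
    using sum_gp_multiplied[of 1 K z] by (cases "K = 0") simp_all
  hence eq: "(\<Sum>n\<in>{1..K}. z ^ n) = (z - z ^ Suc K) / (1 - z)" using z1
    by (simp add: field_simps)
  have nzk: "norm (z - z ^ Suc K) \<le> 2"
    using norm_triangle_ineq4[of z "z ^ Suc K"] by (simp add: z_def norm_power norm_mult)
  have "norm (\<Sum>n\<in>{1..K}. z ^ n) = norm (z - z ^ Suc K) / norm (1 - z)"
    unfolding eq by (rule norm_divide)
  also have "\<dots> \<le> 2 / norm (1 - z)"
    using z1 nzk by (intro divide_right_mono) auto
  also have "\<dots> \<le> 2 / (4 * nd \<theta>)"
    using nz assms by (intro divide_left_mono) (auto simp: norm_minus_commute intro!: mult_pos_pos)
  finally show ?thesis using e_mult_nat z_def by simp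
qed

lemma sum_split3:
  fixes F :: "nat \<Rightarrow> nat \<Rightarrow> complex"
  shows "(\<Sum>m\<in>A. \<Sum>n\<in>A. F m n) = (\<Sum>m\<in>A. \<Sum>n\<in>A. if n < m then F m n else 0)
     + (\<Sum>m\<in>A. \<Sum>n\<in>A. if m < n then F m n else 0) + (\<Sum>m\<in>A. \<Sum>n\<in>A. if m = n then F m n else 0)"
  by (simp add: sum.distrib[symmetric]) (intro sum.cong refl, auto)

lemma weyl:
  fixes \<gamma> :: real and N :: nat
  shows "(norm (\<Sum>m\<in>{1..N}. e (\<gamma> * (of_nat m)^2)))^2
     \<le> real N + 2 * (\<Sum>h\<in>{1..N}. norm (\<Sum>n\<in>{1..N-h}. e ((2 * \<gamma> * of_nat h) * of_nat n)))"
proof -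
  define A where "A = {1..N}"
  define W where "W = (\<Sum>m\<in>A. e (\<gamma> * (of_nat m)^2))"
  define F where "F = (\<lambda>m n::nat. e (\<gamma> * (of_nat m)^2 - \<gamma> * (of_nat n)^2))"
  define U where "U = (\<Sum>m\<in>A. \<Sum>n\<in>A. if n < m then F m n else 0)"
  define V where "V = (\<Sum>m\<in>A. \<Sum>n\<in>A. if m < n then F m n else 0)"
  have fin: "finite A" by (simp add: A_def)
  have WW: "W * cnj W = (\<Sum>m\<in>A. \<Sum>n\<in>A. F m n)"
    unfolding W_def F_def cnj_sum sum_product e_cnj ..
  have diag: "(\<Sum>m\<in>A. \<Sum>n\<in>A. if m = n then F m n else 0) = of_nat N"
  proof -
    have "(\<Sum>m\<in>A. \<Sum>n\<in>A. if m = n then F m n else 0) = (\<Sum>m\<in>A. F m m)"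
      using fin by (intro sum.cong refl) (simp add: sum.delta)
    also have "\<dots> = (\<Sum>m\<in>A. 1)" unfolding F_def using e_int[of 0] by simp
    finally show ?thesis by (simp add: A_def)
  qed
  have FC: "cnj (F m n) = F n m" for m n
  proof -
    have "cnj (F m n) = 1 * cnj (F m n)" by simp
    also have "\<dots> = e 0 * cnj (F m n)" using e_int[of 0] by simp
    also have "\<dots> = F n m" unfolding F_def e_cnj by (simp add: algebra_simps)
    finally show ?thesis .
  qed
  have VU: "V = cnj U"
  proof -
    have "V = (\<Sum>n\<in>A. \<Sum>m\<in>A. if m < n then F m n else 0)"
      unfolding V_def by (rule sum.swap)
    also have "\<dots> = cnj U" unfolding U_def cnj_sum
      by (intro sum.cong refl) (auto simp: FC)
    finally show ?thesis .
  qed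
  have U_eq: "U = (\<Sum>h\<in>A. e (\<gamma> * (of_nat h)^2) * (\<Sum>n\<in>{1..N-h}. e ((2 * \<gamma> * of_nat h) * of_nat n)))"
  proof -
    have "U = (\<Sum>n\<in>A. \<Sum>m\<in>A. if n < m then F m n else 0)"
      unfolding U_def by (rule sum.swap)
    also have "\<dots> = (\<Sum>n\<in>A. \<Sum>h\<in>A. if n + h \<le> N then F (n+h) n else 0)"
    proof (rule sum.cong[OF refl])
      fix n assume n: "n \<in> A"
      have "(\<Sum>m\<in>A. if n < m then F m n else 0) = (\<Sum>m\<in>{m\<in>A. n < m}. F m n)"
        using fin by (simp add: sum.inter_filter)
      also have "\<dots> = (\<Sum>h\<in>{h\<in>A. n + h \<le> N}. F (n+h) n)"
        by (rule sum.reindex_bij_witness[where i="\<lambda>h. n+h" and j="\<lambda>m. m - n"])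
           (use n in \<open>auto simp: A_def\<close>)
      also have "\<dots> = (\<Sum>h\<in>A. if n + h \<le> N then F (n+h) n else 0)"
        using fin by (simp add: sum.inter_filter)
      finally show "(\<Sum>m\<in>A. if n < m then F m n else 0) = (\<Sum>h\<in>A. if n + h \<le> N then F (n+h) n else 0)" .
    qed
    also have "\<dots> = (\<Sum>h\<in>A. \<Sum>n\<in>A. if n + h \<le> N then F (n+h) n else 0)"
      by (rule sum.swap)
    also have "\<dots> = (\<Sum>h\<in>A. e (\<gamma> * (of_nat h)^2) * (\<Sum>n\<in>{1..N-h}. e ((2 * \<gamma> * of_nat h) * of_nat n)))"
    proof (intro sum.cong refl)
      fix h assume h: "h \<in> A"
      have Fe: "F (n+h) n = e (\<gamma> * (of_nat h)^2) * e ((2 * \<gamma> * of_nat h) * of_nat n)" for n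
      proof -
        have "\<gamma> * (of_nat (n+h))^2 - \<gamma> * (of_nat n)^2 = \<gamma> * (of_nat h)^2 + (2 * \<gamma> * of_nat h) * of_nat n"
          by (simp add: power2_eq_square algebra_simps)
        thus ?thesis unfolding F_def by (simp add: e_add)
      qed
      have "(\<Sum>n\<in>A. if n + h \<le> N then F (n+h) n else 0) = (\<Sum>n\<in>{n\<in>A. n + h \<le> N}. F (n+h) n)"
        using fin by (simp add: sum.inter_filter)
      also have "{n\<in>A. n + h \<le> N} = {1..N-h}" using h by (auto simp: A_def)
      finally show "(\<Sum>n\<in>A. if n + h \<le> N then F (n+h) n else 0) = e (\<gamma> * (of_nat h)^2) * (\<Sum>n\<in>{1..N-h}. e ((2 * \<gamma> * of_nat h) * of_nat n))"
        by (simp add: Fe sum_distrib_left)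
    qed
    finally show ?thesis .
  qed
  have nU: "norm U \<le> (\<Sum>h\<in>A. norm (\<Sum>n\<in>{1..N-h}. e ((2 * \<gamma> * of_nat h) * of_nat n)))"
    unfolding U_eq by (rule order_trans[OF norm_sum]) (simp add: norm_mult)
  have "complex_of_real ((norm W)^2) = W * cnj W" by (rule complex_norm_square)
  also have "\<dots> = U + cnj U + of_nat N"
    using WW sum_split3[of F A] diag VU unfolding U_def V_def by simp
  finally have "(norm W)^2 = norm (U + cnj U + of_nat N)"
    by (metis norm_of_real abs_of_nonneg zero_le_power2 norm_ge_zero)
  also have "\<dots> \<le> norm U + norm (cnj U) + real N"
    by (metis (no_types, opaque_lifting) norm_triangle_ineq add_mono norm_of_nat order_trans order_refl)
  finally have "(norm W)^2 \<le> real N + 2 * norm U" by simp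
  thus ?thesis using nU unfolding W_def A_def by simp
qed

definition H :: "nat \<Rightarrow> real" where "H n = (\<Sum>i\<in>{1..n}. 1 / real i)"

lemma H_le: "H n \<le> 1 + ln (real n)"
proof (induction n)
  case 0 then show ?case by (simp add: H_def)
next
  case (Suc n)
  show ?case
  proof (cases "n = 0")
    case True then show ?thesis by (simp add: H_def)
  next
    case False
    have "ln (real n / real (Suc n)) \<le> real n / real (Suc n) - 1"
      using False by (intro ln_le_minus_one) auto
    also have "\<dots> = - 1 / real (Suc n)" by (simp add: field_simps)
    finally have "ln (real n) - ln (real (Suc n)) \<le> - 1 / real (Suc n)"
      using False by (simp add: ln_div)
    moreover have "H (Suc n) = H n + 1 / real (Suc n)" by (simp add: H_def)
    ultimately show ?thesis using Suc.IH by linarith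
  qed
qed

lemma H_nonneg: "H n \<ge> 0" unfolding H_def by (intro sum_nonneg) auto

lemma block_bound:
  fixes \<gamma> :: real and b :: int and r :: nat and f :: "nat \<Rightarrow> real" and Nb :: real
  assumes r: "r \<ge> 1" and cop: "coprime b (int r)"
    and app: "\<bar>\<gamma> - of_int b / of_nat r\<bar> \<le> 1 / (of_nat r)^2"
    and f0: "\<And>k. 0 \<le> f k" and fN: "\<And>k. f k \<le> Nb"
    and fnd: "\<And>k. nd (\<gamma> * of_nat k) > 0 \<Longrightarrow> f k \<le> 1 / (2 * nd (\<gamma> * of_nat k))"
  shows "(\<Sum>j\<in>{1..r}. f (k0 + j)) \<le> 4 * Nb + real r * (1 + ln (real r))"
proof -
  have rpos: "real r > 0" using r by simp
  have Nb0: "Nb \<ge> 0" using f0[of 0] fN[of 0] by linarith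
  define \<delta> where "\<delta> = \<gamma> - of_int b / of_nat r"
  define x0 where "x0 = \<gamma> * of_nat k0"
  define s where "s = \<lfloor>of_nat r * x0\<rfloor>"
  define t where "t = of_nat r * x0 - of_int s"
  have t01: "0 \<le> t" "t < 1" unfolding t_def s_def by linarith+
  define L where "L = (\<lambda>j::nat. nat ((s + b * int j) mod int r))"
  define g where "g = (\<lambda>l::nat. if l < 2 then Nb else real r / (2 * (real l - 1)))"
  have g0: "g l \<ge> 0" for l using Nb0 by (simp add: g_def)
  have Lr: "L j < r" for j unfolding L_def using r by (simp add: nat_less_iff)
  have key: "f (k0 + j) \<le> g (L j) + g (r - 1 - L j)" if j: "j \<in> {1..r}" for j
  proof -
    define l where "l = (s + b * int j) mod int r"
    define z where "z = (s + b * int j) div int r"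
    have l0: "0 \<le> l" "l < int r" unfolding l_def using r by auto
    have Ll: "int (L j) = l" unfolding L_def l_def using l0 l_def by simp
    have decomp: "s + b * int j = int r * z + l" unfolding z_def l_def by simp
    have "\<gamma> * of_nat (k0 + j) = (of_int (s + b * int j) + t) / of_nat r + \<delta> * of_nat j"
      using rpos by (simp add: \<delta>_def t_def x0_def field_simps)
    also have "of_int (s + b * int j) = of_nat r * of_int z + (of_int l :: real)"
      using decomp by (metis of_int_add of_int_mult of_int_of_nat_eq)
    finally have eq: "\<gamma> * of_nat (k0 + j) = ((of_int l + t) / of_nat r + \<delta> * of_nat j) + of_int z"
      using rpos by (simp add: field_simps)
    have dj: "\<bar>\<delta> * of_nat j\<bar> \<le> 1 / of_nat r"
    proof -
      have "\<bar>\<delta> * of_nat j\<bar> = \<bar>\<delta>\<bar> * of_nat j" by (simp add: abs_mult)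
      also have "\<dots> \<le> 1 / (of_nat r)^2 * of_nat r"
        using app j unfolding \<delta>_def by (intro mult_mono) auto
      also have "\<dots> = 1 / of_nat r" by (simp add: power2_eq_square)
      finally show ?thesis .
    qed
    define u where "u = (of_int l + t) / (of_nat r :: real)"
    have u01: "0 \<le> u" "u < 1" unfolding u_def using l0 t01 rpos
      by (auto simp: field_simps)
    have "nd (\<gamma> * of_nat (k0 + j)) = nd (u + \<delta> * of_nat j)" unfolding eq u_def by (rule nd_shift)
    also have "\<dots> \<ge> nd u - \<bar>\<delta> * of_nat j\<bar>" by (rule nd_perturb)
    finally have nd1: "nd (\<gamma> * of_nat (k0 + j)) \<ge> min u (1 - u) - 1 / of_nat r"
      using nd_unit[OF u01] dj by linarith
    have ul: "u \<ge> real (L j) / real r" unfolding u_def using Ll t01 rpos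
      by (simp add: divide_right_mono)
    have ur: "1 - u \<ge> real (r - 1 - L j) / real r"
    proof -
      have "real (r - 1 - L j) = real r - 1 - real (L j)" using Lr[of j] by simp
      moreover have "1 - u = (real r - real (L j) - t) / real r" unfolding u_def using Ll rpos
        by (simp add: field_simps)
      ultimately show ?thesis using t01 rpos by (simp add: divide_right_mono)
    qed
    show ?thesis
    proof (cases "L j < 2 \<or> r - 1 - L j < 2")
      case True
      hence "g (L j) = Nb \<or> g (r - 1 - L j) = Nb" by (auto simp: g_def)
      then show ?thesis using fN[of "k0+j"] g0[of "L j"] g0[of "r - 1 - L j"]
        by (elim disjE) linarith+
    next
      case False
      define m where "m = min (L j) (r - 1 - L j)"
      have m2: "m \<ge> 2" using False unfolding m_def by auto
      have "real m / real r \<le> real (L j) / real r" "real m / real r \<le> real (r - 1 - L j) / real r"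
        unfolding m_def using rpos by (auto intro!: divide_right_mono)
      hence "min u (1 - u) \<ge> real m / real r"
        using ul ur by linarith
      with nd1 have "nd (\<gamma> * of_nat (k0 + j)) \<ge> real m / real r - 1 / real r"
        by linarith
      hence ndm: "nd (\<gamma> * of_nat (k0 + j)) \<ge> (real m - 1) / real r"
        by (simp add: diff_divide_distrib)
      have pos: "(real m - 1) / real r > 0" using m2 rpos by simp
      have "f (k0 + j) \<le> 1 / (2 * nd (\<gamma> * of_nat (k0 + j)))"
        using fnd[of "k0 + j"] ndm pos by simp
      also have "\<dots> \<le> 1 / (2 * ((real m - 1) / real r))"
        using ndm pos by (intro divide_left_mono mult_left_mono mult_pos_pos) auto
      also have "\<dots> = g m" using m2 rpos by (simp add: g_def field_simps)
      also have "g m \<le> g (L j) + g (r - 1 - L j)"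
        using g0[of "L j"] g0[of "r - 1 - L j"] unfolding m_def by (auto simp: min_def)
      finally show ?thesis .
    qed
  qed
  have injL: "inj_on L {1..r}"
  proof
    fix j1 j2 assume j: "j1 \<in> {1..r}" "j2 \<in> {1..r}" and eq: "L j1 = L j2"
    have "(s + b * int j1) mod int r = (s + b * int j2) mod int r"
      using eq unfolding L_def using r
      by (metis Euclidean_Rings.pos_mod_sign eq_nat_nat_iff of_nat_0_less_iff zero_less_one less_le_trans)
    hence "int r dvd (s + b * int j1) - (s + b * int j2)" by (simp add: mod_eq_dvd_iff)
    hence "int r dvd b * (int j1 - int j2)" by (simp add: algebra_simps)
    hence d: "int r dvd (int j1 - int j2)" using cop
      by (metis coprime_commute coprime_dvd_mult_right_iff)
    show "j1 = j2"
    proof (rule ccontr)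
      assume "j1 \<noteq> j2"
      hence "int j1 - int j2 \<noteq> 0" by simp
      from dvd_imp_le_int[OF this d] j show False by auto
    qed
  qed
  have imL: "L ` {1..r} = {..<r}"
  proof (rule card_subset_eq)
    show "L ` {1..r} \<subseteq> {..<r}" using Lr by auto
    show "card (L ` {1..r}) = card {..<r}" using card_image[OF injL] by simp
  qed simp
  have "(\<Sum>j\<in>{1..r}. f (k0 + j)) \<le> (\<Sum>j\<in>{1..r}. g (L j) + g (r - 1 - L j))"
    by (intro sum_mono key)
  also have "\<dots> = (\<Sum>l\<in>L ` {1..r}. g l + g (r - 1 - l))"
    using sum.reindex[OF injL, of "\<lambda>l. g l + g (r - 1 - l)"] by simp
  also have "\<dots> = (\<Sum>l<r. g l) + (\<Sum>l<r. g (r - Suc l))"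
    unfolding imL by (simp add: sum.distrib)
  also have "(\<Sum>l<r. g (r - Suc l)) = (\<Sum>l<r. g l)" by (rule sum.nat_diff_reindex)
  also have "(\<Sum>l<r. g l) \<le> 2 * Nb + real r / 2 * H r"
  proof -
    have "(\<Sum>l<r. g l) = (\<Sum>l<r. (if l < 2 then Nb else 0)) + (\<Sum>l<r. (if l < 2 then 0 else real r / (2 * (real l - 1))))"
      by (simp add: g_def sum.distrib[symmetric] if_distrib) (intro sum.cong refl, auto)
    also have "(\<Sum>l<r. (if l < 2 then Nb else 0)) \<le> (\<Sum>l<(2::nat). (if l < 2 then Nb else 0))"
    proof -
      have "(\<Sum>l<r. (if l < 2 then Nb else 0)) = (\<Sum>l\<in>{..<r} \<inter> {..<2}. Nb)"
        by (simp add: sum.inter_filter[symmetric] Int_def)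
      also have "\<dots> \<le> (\<Sum>l\<in>{..<2::nat}. Nb)" using Nb0 by (intro sum_mono2) auto
      finally show ?thesis by simp
    qed
    also have "(\<Sum>l<2. (if l < (2::nat) then Nb else 0)) = 2 * Nb" by (simp add: numeral_2_eq_2)
    also have "(\<Sum>l<r. (if l < 2 then 0 else real r / (2 * (real l - 1)))) \<le> real r / 2 * H r"
    proof -
      have "(\<Sum>l<r. (if l < 2 then 0 else real r / (2 * (real l - 1)))) \<le> (\<Sum>l<r+2. (if l < 2 then 0 else real r / (2 * (real l - 1))))"
        by (intro sum_mono2) auto
      also have "\<dots> = (\<Sum>i\<in>{1..r}. real r / 2 * (1 / real i))"
        by (rule sum.reindex_bij_witness_not_neutral[where i="\<lambda>i. i + 1" and j="\<lambda>l. l - 1" and S'="{0,1}" and T'="{}"])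
           (auto simp: field_simps of_nat_diff)
      also have "\<dots> = real r / 2 * H r" by (simp add: H_def sum_distrib_left)
      finally show ?thesis .
    qed
    finally show ?thesis by simp
  qed
  finally have "(\<Sum>j\<in>{1..r}. f (k0 + j)) \<le> 4 * Nb + real r * H r" by simp
  also have "real r * H r \<le> real r * (1 + ln (real r))" using H_le[of r] by (intro mult_left_mono) auto
  finally show ?thesis by simp
qed

lemma blocks_sum:
  fixes \<gamma> :: real and b :: int and r :: nat and f :: "nat \<Rightarrow> real" and Nb :: real
  assumes r: "r \<ge> 1" and cop: "coprime b (int r)"
    and app: "\<bar>\<gamma> - of_int b / of_nat r\<bar> \<le> 1 / (of_nat r)^2"
    and f0: "\<And>k. 0 \<le> f k" and fN: "\<And>k. f k \<le> Nb"
    and fnd: "\<And>k. nd (\<gamma> * of_nat k) > 0 \<Longrightarrow> f k \<le> 1 / (2 * nd (\<gamma> * of_nat k))"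
  shows "(\<Sum>h\<in>{1..N}. f h) \<le> (real N / real r + 1) * (4 * Nb + real r * (1 + ln (real r)))"
proof -
  define Bd where "Bd = 4 * Nb + real r * (1 + ln (real r))"
  have Bd0: "Bd \<ge> 0" unfolding Bd_def using f0[of 0] fN[of 0] r
    by (intro add_nonneg_nonneg mult_nonneg_nonneg) auto
  have ind: "(\<Sum>h\<in>{1..B * r}. f h) \<le> real B * Bd" for B
  proof (induction B)
    case 0 then show ?case by simp
  next
    case (Suc B)
    have split: "{1..Suc B * r} = {1..B * r} \<union> {B * r + 1..B * r + r}" by auto
    have "(\<Sum>h\<in>{1..Suc B * r}. f h) = (\<Sum>h\<in>{1..B * r}. f h) + (\<Sum>h\<in>{B * r + 1..B * r + r}. f h)"
      unfolding split by (rule sum.union_disjoint) auto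
    also have "(\<Sum>h\<in>{B * r + 1..B * r + r}. f h) = (\<Sum>j\<in>{1..r}. f (B * r + j))"
      by (rule sum.reindex_bij_witness[where j="\<lambda>h. h - B * r" and i="\<lambda>j. B * r + j"]) auto
    also have "\<dots> \<le> Bd" unfolding Bd_def by (rule block_bound[OF r cop app f0 fN fnd])
    finally show ?case using Suc.IH by (simp add: algebra_simps)
  qed
  define B where "B = N div r + 1"
  have NB: "N \<le> B * r"
  proof -
    have m: "N mod r < r" using r by simp
    have e: "N div r * r + N mod r = N" by simp
    have "B * r = N div r * r + r" unfolding B_def by simp
    thus ?thesis using m e by linarith
  qed
  have "(\<Sum>h\<in>{1..N}. f h) \<le> (\<Sum>h\<in>{1..B * r}. f h)"
    using NB f0 by (intro sum_mono2) auto
  also have "\<dots> \<le> real B * Bd" by (rule ind)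
  also have "real B \<le> real N / real r + 1"
  proof -
    have "real (N div r) * real r \<le> real N"
      by (metis of_nat_le_iff of_nat_mult div_times_less_eq_dividend)
    hence "real (N div r) \<le> real N / real r" using r by (simp add: field_simps)
    thus ?thesis unfolding B_def by simp
  qed
  hence "real B * Bd \<le> (real N / real r + 1) * Bd" using Bd0 by (intro mult_right_mono) auto
  finally show ?thesis unfolding Bd_def .
qed

lemma denominator_lb:
  fixes a h k :: int and q d :: nat and \<beta> \<theta> :: real
  assumes q: "q \<ge> 1" and cop: "coprime a (int q)" and \<beta>: "\<bar>\<beta>\<bar> < 1 / (of_nat q)^2"
    and \<theta>: "\<theta> = 2 * ((of_int a / of_nat q + \<beta>) * of_nat d ^ 4)"
    and d: "d \<ge> 1" and k: "k > 0" and dir: "\<bar>of_int k * \<theta> - of_int h\<bar> < 1 / real (2 * q)"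
  shows "real q \<le> 4 * real d ^ 4 * of_int k"
proof -
  have qpos: "real q > 0" using q by simp
  define Z where "Z = int q * h - 2 * int d ^ 4 * a * k"
  have Zeq: "of_int Z = real q * (of_int h - of_int k * \<theta>) + of_int k * real q * 2 * real d ^ 4 * \<beta>"
    unfolding Z_def \<theta> using qpos by (simp add: field_simps)
  have Zt: "\<bar>of_int Z\<bar> \<le> real q * \<bar>of_int h - of_int k * \<theta>\<bar> + of_int k * real q * 2 * real d ^ 4 * \<bar>\<beta>\<bar>"
  proof -
    have "\<bar>of_int k * real q * 2 * real d ^ 4 * \<beta>\<bar> = of_int k * real q * 2 * real d ^ 4 * \<bar>\<beta>\<bar>"
      using k qpos by (simp add: abs_mult)
    moreover have "\<bar>real q * (of_int h - of_int k * \<theta>)\<bar> = real q * \<bar>of_int h - of_int k * \<theta>\<bar>"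
      using qpos by (simp add: abs_mult)
    ultimately show ?thesis unfolding Zeq by (metis abs_triangle_ineq)
  qed
  have Z1: "real q * \<bar>of_int h - of_int k * \<theta>\<bar> \<le> 1/2"
  proof -
    have "real q * \<bar>of_int h - of_int k * \<theta>\<bar> \<le> real q * (1 / real (2 * q))"
      using dir qpos by (intro mult_left_mono) (auto simp: abs_minus_commute)
    also have "real q * (1 / real (2 * q)) = 1/2" using qpos by simp
    finally show ?thesis .
  qed
  have Z2: "of_int k * real q * 2 * real d ^ 4 * \<bar>\<beta>\<bar> \<le> 2 * real d ^ 4 * of_int k / real q"
  proof -
    have "of_int k * real q * 2 * real d ^ 4 * \<bar>\<beta>\<bar> \<le> of_int k * real q * 2 * real d ^ 4 * (1 / (of_nat q)^2)"
      using \<beta> k qpos by (intro mult_left_mono) auto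
    also have "of_int k * real q * 2 * real d ^ 4 * (1 / (of_nat q)^2) = 2 * real d ^ 4 * of_int k / real q"
      using qpos by (simp add: power2_eq_square field_simps)
    finally show ?thesis .
  qed
  have Zb: "\<bar>of_int Z\<bar> \<le> 1/2 + 2 * real d ^ 4 * of_int k / real q" using Zt Z1 Z2 by linarith
  show ?thesis
  proof (cases "Z = 0")
    case True
    hence "int q dvd (2 * int d ^ 4 * k) * a" unfolding Z_def
      by (metis dvd_triv_left eq_iff_diff_eq_0 mult.commute mult.left_commute)
    hence "int q dvd 2 * int d ^ 4 * k" using cop
      by (metis coprime_commute coprime_dvd_mult_left_iff)
    hence "int q \<le> 2 * int d ^ 4 * k" using k
      using d by (intro zdvd_imp_le) (auto intro!: mult_pos_pos)
    hence "real_of_int (int q) \<le> real_of_int (2 * int d ^ 4 * k)"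
      by (simp only: of_int_le_iff)
    hence "real q \<le> 2 * real d ^ 4 * of_int k" by simp
    moreover have "0 \<le> real d ^ 4 * of_int k" using k by simp
    ultimately show ?thesis by linarith
  next
    case False
    hence "\<bar>Z\<bar> \<ge> 1" by linarith
    hence "real_of_int \<bar>Z\<bar> \<ge> real_of_int 1" by (simp only: of_int_le_iff)
    hence "\<bar>of_int Z :: real\<bar> \<ge> 1" by simp
    with Zb have "1/2 \<le> 2 * real d ^ 4 * of_int k / real q" by linarith
    thus ?thesis using qpos by (simp add: field_simps)
  qed
qed

lemma T_bound:
  fixes \<alpha> \<beta> X :: real and a :: int and q d N :: nat
  assumes q: "q \<ge> 2" and cop: "coprime a (int q)" and \<alpha>: "\<alpha> = of_int a / of_nat q + \<beta>"
    and \<beta>: "\<bar>\<beta>\<bar> < 1 / (of_nat q)^2" and d: "d \<ge> 1" and N: "real N * real d ^ 2 \<le> X"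
  shows "(norm (\<Sum>m\<in>{1..N}. e ((\<alpha> * real d ^ 4) * (of_nat m)^2)))^2
           \<le> 32 * X^2 / real q + 26 * real N * ln (real q) + 16 * real q * ln (real q)"
proof -
  define \<gamma> where "\<gamma> = \<alpha> * real d ^ 4"
  define \<theta> where "\<theta> = 2 * \<gamma>"
  have qpos: "real q > 0" using q by simp
  have q2: "2 * q > 0" using q by simp
  obtain h k where hk: "coprime h k" "0 < k" "k \<le> int (2 * q)"
      "\<bar>of_int k * \<theta> - of_int h\<bar> < 1 / real (2 * q)"
    using Dirichlet_approx_coprime[OF q2, of \<theta>] by blast
  define r where "r = nat k"
  have kr: "k = int r" using hk(2) unfolding r_def by simp
  have r1: "r \<ge> 1" using hk(2) unfolding r_def by simp
  have rpos: "real r > 0" using r1 by simp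
  have r2q: "real r \<le> 2 * real q" using hk(3) kr by simp
  have copb: "coprime h (int r)" using hk(1) kr by simp
  have app: "\<bar>\<theta> - of_int h / of_nat r\<bar> \<le> 1 / (of_nat r)^2"
  proof -
    have "\<bar>\<theta> - of_int h / of_nat r\<bar> = \<bar>of_int k * \<theta> - of_int h\<bar> / real r"
      using rpos kr by (simp add: field_simps abs_divide[symmetric])
    also have "\<dots> \<le> (1 / real (2 * q)) / real r"
      using hk(4) rpos by (intro divide_right_mono) auto
    also have "\<dots> \<le> (1 / real r) / real r"
      using r2q rpos qpos by (intro divide_right_mono divide_left_mono) auto
    finally show ?thesis by (simp add: power2_eq_square)
  qed
  have lb: "real q \<le> 4 * real d ^ 4 * real r"
    using denominator_lb[of q a \<beta> \<theta> d k h] q cop \<beta> hk(2) hk(4) kr d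
    unfolding \<theta>_def \<gamma>_def \<alpha> by simp
  define f where "f = (\<lambda>h. norm (\<Sum>n\<in>{1..N-h}. e ((\<theta> * of_nat h) * of_nat n)))"
  have f0: "\<And>k. 0 \<le> f k" unfolding f_def by simp
  have fN: "f k \<le> real N" for k
  proof -
    have "f k \<le> (\<Sum>n\<in>{1..N-k}. norm (e ((\<theta> * of_nat k) * of_nat n)))" unfolding f_def by (rule norm_sum)
    also have "\<dots> = real (N - k)" by simp
    finally show ?thesis by linarith
  qed
  have fnd: "\<And>k. nd (\<theta> * of_nat k) > 0 \<Longrightarrow> f k \<le> 1 / (2 * nd (\<theta> * of_nat k))"
    unfolding f_def by (rule geom_bound)
  have W: "(norm (\<Sum>m\<in>{1..N}. e (\<gamma> * (of_nat m)^2)))^2 \<le> real N + 2 * (\<Sum>h\<in>{1..N}. f h)"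
    using weyl[of \<gamma> N] unfolding f_def \<theta>_def by simp
  have BS: "(\<Sum>h\<in>{1..N}. f h) \<le> (real N / real r + 1) * (4 * real N + real r * (1 + ln (real r)))"
    by (rule blocks_sum[OF r1 copb app f0 fN fnd])
  define L where "L = ln (real q)"
  have L0: "L \<ge> ln 2" unfolding L_def using q by simp
  have ln2: "ln (2::real) \<ge> 1/2"
  proof -
    have "exp (1/2::real) ^ 2 = exp 1" by (simp add: exp_double[symmetric])
    also have "\<dots> \<le> 2 ^ 2" using exp_le by simp
    finally have "exp (1/2::real) \<le> 2" by (rule power2_le_imp_le) simp
    thus ?thesis by (metis ln_exp ln_le_cancel_iff exp_gt_zero zero_less_numeral)
  qed
  have lnr: "1 + ln (real r) \<le> 4 * L"
  proof -
    have "ln (real r) \<le> ln (2 * real q)" using rpos r2q by simp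
    also have "\<dots> = ln 2 + L" unfolding L_def using qpos by (simp add: ln_mult)
    finally show ?thesis using L0 ln2 by linarith
  qed
  have lnr0: "0 \<le> 1 + ln (real r)" using r1 by simp
  have NN: "real N / real r * (4 * real N) \<le> 16 * X^2 / real q"
  proof -
    have ir: "1 / real r \<le> 4 * real d ^ 4 / real q" using lb rpos qpos by (simp add: field_simps)
    have "real N / real r * (4 * real N) = 4 * real N ^ 2 * (1 / real r)" by (simp add: power2_eq_square)
    also have "\<dots> \<le> 4 * real N ^ 2 * (4 * real d ^ 4 / real q)"
      using ir by (intro mult_left_mono) auto
    also have "\<dots> = 16 * (real N * real d ^ 2)^2 / real q"
      by (simp add: power2_eq_square power4_eq_xxxx field_simps)
    also have "\<dots> \<le> 16 * X^2 / real q"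
      using N qpos by (intro divide_right_mono mult_left_mono power_mono) auto
    finally show ?thesis .
  qed
  define c where "c = 1 + ln (real r)"
  have E1: "(real N / real r + 1) * (4 * real N + real r * c) = real N / real r * (4 * real N) + real N * c + 4 * real N + real r * c"
    using rpos by (simp add: field_simps)
  have E3: "real N * c \<le> real N * (4 * L)" using lnr unfolding c_def by (intro mult_left_mono) auto
  have E4: "real r * c \<le> (2 * real q) * (4 * L)"
    using lnr r2q lnr0 rpos unfolding c_def by (intro mult_mono) auto
  have E5: "9 * real N \<le> 18 * (real N * L)"
  proof -
    have "real N * (1/2) \<le> real N * L" using L0 ln2 by (intro mult_left_mono) auto
    thus ?thesis by linarith
  qed
  have E6: "real N * (4 * L) = 4 * (real N * L)" "(2 * real q) * (4 * L) = 8 * (real q * L)" by simp_all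
  have fin: "(norm (\<Sum>m\<in>{1..N}. e (\<gamma> * (of_nat m)^2)))^2 \<le> 32 * X^2 / real q + 26 * (real N * L) + 16 * (real q * L)"
    using W BS NN E1 E3 E4 E5 E6 unfolding c_def by linarith
  have E7: "26 * (real N * L) = 26 * real N * L" "16 * (real q * L) = 16 * real q * L" by simp_all
  show ?thesis using fin unfolding E7 unfolding \<gamma>_def L_def .
qed

lemma pf_prod_primes:
  fixes T :: "nat set"
  assumes "finite T" "\<And>p. p \<in> T \<Longrightarrow> prime p"
  shows "prime_factors (\<Prod>T) = T"
proof -
  have "0 \<notin> (\<lambda>x. x) ` T" using assms(2) by (auto dest: prime_gt_0_nat)
  hence "prime_factors (\<Prod>T) = \<Union>((prime_factors \<circ> (\<lambda>x. x)) ` T)"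
    using prime_factors_prod[OF assms(1), of "\<lambda>x. x"] by simp
  also have "\<dots> = T" using assms(2) by (auto simp: prime_prime_factors)
  finally show ?thesis .
qed

lemma sqfree_prod_primes:
  fixes T :: "nat set"
  assumes "finite T" "\<And>p. p \<in> T \<Longrightarrow> prime p"
  shows "squarefree (\<Prod>T)"
  using assms by (intro squarefree_prod_coprime) (auto intro: primes_coprime squarefree_prime)

lemma prod_primes_dvd:
  fixes T :: "nat set" and s :: nat
  assumes s: "s > 0" and T: "T \<subseteq> prime_factors s"
  shows "\<Prod>T dvd s"
proof -
  have fin: "finite T" using T finite_subset by blast
  have pr: "\<And>p. p \<in> T \<Longrightarrow> prime p" using T by auto
  have "0 \<notin> T" using pr not_prime_0 by blast
  hence nz: "\<Prod>T \<noteq> 0" by (simp add: fin)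
  show ?thesis
  proof (rule multiplicity_le_imp_dvd[OF nz])
    fix p :: nat assume p: "prime p"
    have m1: "multiplicity p (\<Prod>T) \<le> 1"
      using squarefree_factorial_semiring''[OF nz] sqfree_prod_primes[OF fin pr] p by blast
    show "multiplicity p (\<Prod>T) \<le> multiplicity p s"
    proof (cases "p \<in> T")
      case True
      hence "p \<in> prime_factors s" using T by auto
      hence "multiplicity p s > 0" by (simp add: prime_factors_multiplicity)
      thus ?thesis using m1 by linarith
    next
      case False
      hence "p \<notin> prime_factors (\<Prod>T)" using pf_prod_primes[OF fin pr] by simp
      hence "multiplicity p (\<Prod>T) = 0" using p by (simp add: prime_factors_multiplicity)
      thus ?thesis by simp
    qed
  qed
qed

lemma sqfree_eq_prod_pf:
  fixes d :: nat
  assumes "squarefree d"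
  shows "\<Prod>(prime_factors d) = d"
proof -
  have nz: "d \<noteq> 0"
  proof
    assume "d = 0" with assms show False by simp
  qed
  have "(\<Prod>p\<in>prime_factors d. p ^ multiplicity p d) = normalize d" by (rule prod_prime_factors[OF nz])
  moreover have "(\<Prod>p\<in>prime_factors d. p ^ multiplicity p d) = (\<Prod>p\<in>prime_factors d. p)"
    using squarefree_factorial_semiring'[OF nz] assms by (intro prod.cong) auto
  ultimately show ?thesis by simp
qed

lemma mu_sum:
  fixes s :: nat
  assumes s: "s > 0"
  shows "(\<Sum>d\<in>{d. d dvd s}. moebius_mu d) = (if s = 1 then 1 else 0)"
proof -
  define P where "P = prime_factors s"
  define S where "S = {d. d dvd s \<and> squarefree d}"
  have finP: "finite P" unfolding P_def by simp
  have "(\<Sum>d\<in>{d. d dvd s}. moebius_mu d) = (\<Sum>d\<in>S. (-1) ^ card (prime_factors d))"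
  proof (rule sum.mono_neutral_cong_right)
    show "finite {d. d dvd s}" using s by simp
    show "S \<subseteq> {d. d dvd s}" unfolding S_def by auto
    show "\<forall>i\<in>{d. d dvd s} - S. moebius_mu i = 0" unfolding S_def moebius_mu_def by auto
    show "moebius_mu x = (-1) ^ card (prime_factors x)" if "x \<in> S" for x
      using that s unfolding S_def moebius_mu_def by auto
  qed
  also have "\<dots> = (\<Sum>T\<in>Pow P. (-1) ^ card (prime_factors (\<Prod>T)))"
  proof (rule sum.reindex_bij_betw[symmetric])
    show "bij_betw (\<lambda>T. \<Prod>T) (Pow P) S"
    proof (rule bij_betw_byWitness[where f'=prime_factors])
      show "\<forall>a\<in>Pow P. prime_factors (\<Prod>a) = a"
        using finP by (auto intro!: pf_prod_primes simp: P_def dest: finite_subset)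
      show "\<forall>a'\<in>S. \<Prod>(prime_factors a') = a'"
        unfolding S_def by (auto intro: sqfree_eq_prod_pf)
      show "(\<lambda>T. \<Prod>T) ` Pow P \<subseteq> S"
        unfolding S_def P_def using s finP
        by (auto intro!: prod_primes_dvd sqfree_prod_primes simp: P_def dest: finite_subset)
      show "prime_factors ` S \<subseteq> Pow P"
        unfolding S_def P_def using s by (auto intro: dvd_prime_factors[THEN subsetD])
    qed
  qed
  also have "\<dots> = (\<Sum>T\<in>Pow P. (-1) ^ card T)"
  proof (rule sum.cong[OF refl])
    fix T assume "T \<in> Pow P"
    hence "prime_factors (\<Prod>T) = T" using finP
      by (intro pf_prod_primes) (auto simp: P_def dest: finite_subset)
    thus "(-1) ^ card (prime_factors (\<Prod>T)) = (-1::int) ^ card T" by simp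
  qed
  also have "\<dots> = (\<Prod>x\<in>P. (1::int) - 1)"
    using prod_diff_conv_sum[OF finP, of "\<lambda>_. (1::int)" "\<lambda>_. 1"] by simp
  also have "\<dots> = (if s = 1 then 1 else 0)"
  proof (cases "s = 1")
    case True then show ?thesis by (simp add: P_def)
  next
    case False
    hence "P \<noteq> {}" unfolding P_def using s
      by (metis prime_factorization_empty_iff set_mset_eq_empty_iff nat_dvd_1_iff_1 neq0_conv)
    then obtain p where "p \<in> P" by blast
    then show ?thesis using False finP by (auto simp: card_gt_0_iff)
  qed
  finally show ?thesis .
qed

lemma sqfree_iff_square_part:
  fixes n :: nat assumes "n > 0"
  shows "squarefree n \<longleftrightarrow> square_part n = 1"
proof
  assume "squarefree n"
  hence "square_part n dvd 1" using squarefreeD square_part_square_dvd by blast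
  thus "square_part n = 1" by simp
next
  assume h: "square_part n = 1"
  show "squarefree n"
  proof (rule squarefreeI)
    fix x :: nat assume "x ^ 2 dvd n"
    hence "x dvd square_part n" by (simp add: dvd_square_part_iff)
    thus "x dvd 1" using h by simp
  qed
qed

lemma mu_sq:
  fixes n :: nat assumes n: "n > 0"
  shows "moebius_mu n ^ 2 = (\<Sum>d\<in>{d. d^2 dvd n}. moebius_mu d)"
proof -
  have sp: "square_part n > 0" using n by (metis neq0_conv square_part_0_iff)
  have "{d. d^2 dvd n} = {d. d dvd square_part n}" by (simp add: dvd_square_part_iff)
  hence "(\<Sum>d\<in>{d. d^2 dvd n}. moebius_mu d) = (if square_part n = 1 then 1 else 0)"
    using mu_sum[OF sp] by simp
  also have "\<dots> = (if squarefree n then 1 else 0)" using sqfree_iff_square_part[OF n] by simp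
  also have "\<dots> = moebius_mu n ^ 2" using n
    by (simp add: moebius_mu_def power2_eq_square power_mult_distrib[symmetric])
  finally show ?thesis by simp
qed

lemma decomp:
  fixes M :: nat and f :: "nat \<Rightarrow> complex"
  shows "(\<Sum>n\<in>{1..M}. of_int ((moebius_mu n)^2) * f n)
       = (\<Sum>d\<in>{1..M}. of_int (moebius_mu d) * (\<Sum>m\<in>{1..M div d^2}. f (d^2 * m)))"
proof -
  have "(\<Sum>n\<in>{1..M}. of_int ((moebius_mu n)^2) * f n)
      = (\<Sum>n\<in>{1..M}. \<Sum>d\<in>{1..M}. if d^2 dvd n then of_int (moebius_mu d) * f n else 0)"
  proof (rule sum.cong[OF refl])
    fix n assume n: "n \<in> {1..M}"
    have sub: "{d. d^2 dvd n} \<subseteq> {1..M}"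
    proof
      fix d assume "d \<in> {d. d^2 dvd n}"
      hence dv: "d^2 dvd n" by simp
      have "d \<noteq> 0" by (rule ccontr) (use dv n in simp)
      moreover have "d^2 \<le> n" using dv n by (intro dvd_imp_le) auto
      moreover have "d \<le> d^2" by (simp add: power2_eq_square)
      ultimately show "d \<in> {1..M}" using n by auto
    qed
    have "of_int ((moebius_mu n)^2) * f n = (\<Sum>d\<in>{d. d^2 dvd n}. of_int (moebius_mu d)) * f n"
      using mu_sq[of n] n by simp
    also have "\<dots> = (\<Sum>d\<in>{d. d^2 dvd n}. of_int (moebius_mu d) * f n)" by (simp add: sum_distrib_right)
    also have "{d. d^2 dvd n} = {d\<in>{1..M}. d^2 dvd n}" using sub by auto
    also have "(\<Sum>d\<in>{d\<in>{1..M}. d^2 dvd n}. of_int (moebius_mu d) * f n) = (\<Sum>d\<in>{1..M}. if d^2 dvd n then of_int (moebius_mu d) * f n else 0)"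
      by (rule sum.inter_filter) simp
    finally show "of_int ((moebius_mu n)^2) * f n = (\<Sum>d\<in>{1..M}. if d^2 dvd n then of_int (moebius_mu d) * f n else 0)" .
  qed
  also have "\<dots> = (\<Sum>d\<in>{1..M}. \<Sum>n\<in>{1..M}. if d^2 dvd n then of_int (moebius_mu d) * f n else 0)"
    by (rule sum.swap)
  also have "\<dots> = (\<Sum>d\<in>{1..M}. of_int (moebius_mu d) * (\<Sum>m\<in>{1..M div d^2}. f (d^2 * m)))"
  proof (rule sum.cong[OF refl])
    fix d assume d: "d \<in> {1..M}"
    have d2: "d^2 > 0" using d by simp
    have "(\<Sum>n\<in>{1..M}. if d^2 dvd n then of_int (moebius_mu d) * f n else 0)
        = (\<Sum>n\<in>{n\<in>{1..M}. d^2 dvd n}. of_int (moebius_mu d) * f n)"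
      by (rule sum.inter_filter[symmetric]) simp
    also have "\<dots> = (\<Sum>m\<in>{1..M div d^2}. of_int (moebius_mu d) * f (d^2 * m))"
    proof (rule sum.reindex_bij_witness[where i="\<lambda>m. d^2 * m" and j="\<lambda>n. n div d^2"])
      show "\<And>a. a \<in> {n \<in> {1..M}. d\<^sup>2 dvd n} \<Longrightarrow> d\<^sup>2 * (a div d\<^sup>2) = a" by auto
      show "\<And>a. a \<in> {n \<in> {1..M}. d\<^sup>2 dvd n} \<Longrightarrow> a div d\<^sup>2 \<in> {1..M div d\<^sup>2}"
        using d2 by (auto elim!: dvdE simp: div_le_mono)
      show "\<And>b. b \<in> {1..M div d\<^sup>2} \<Longrightarrow> d\<^sup>2 * b div d\<^sup>2 = b" using d2 by simp
      show "\<And>b. b \<in> {1..M div d\<^sup>2} \<Longrightarrow> d\<^sup>2 * b \<in> {n \<in> {1..M}. d\<^sup>2 dvd n}"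
        using d2 by (auto simp: less_eq_div_iff_mult_less_eq mult.commute)
      show "\<And>a. a \<in> {n \<in> {1..M}. d\<^sup>2 dvd n} \<Longrightarrow> of_int (moebius_mu d) * f (d\<^sup>2 * (a div d\<^sup>2)) = of_int (moebius_mu d) * f a"
        by auto
    qed
    also have "\<dots> = of_int (moebius_mu d) * (\<Sum>m\<in>{1..M div d^2}. f (d^2 * m))"
      by (simp add: sum_distrib_left)
    finally show "(\<Sum>n\<in>{1..M}. if d^2 dvd n then of_int (moebius_mu d) * f n else 0)
        = of_int (moebius_mu d) * (\<Sum>m\<in>{1..M div d^2}. f (d^2 * m))" .
  qed
  finally show ?thesis .
qed

lemma qroot_facts:
  fixes x :: real assumes "x > 0"
  shows "(x powr (1/4)) ^ 4 = x" "sqrt x = (x powr (1/4))^2" "x powr (1/4) > 0"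
proof -
  show "(x powr (1/4)) ^ 4 = x" using assms by (simp add: powr_power)
  have "sqrt x = x powr (1/2)" using assms by (simp add: powr_half_sqrt)
  also have "\<dots> = (x powr (1/4))^2" using assms by (simp add: powr_power)
  finally show "sqrt x = (x powr (1/4))^2" .
  show "x powr (1/4) > 0" using assms by simp
qed

lemma Td_bound:
  fixes \<alpha> \<beta> X :: real and a :: int and q d M :: nat
  assumes q: "q \<ge> 2" and cop: "coprime a (int q)" and \<alpha>: "\<alpha> = of_int a / of_nat q + \<beta>"
    and \<beta>: "\<bar>\<beta>\<bar> < 1 / (of_nat q)^2" and d: "d \<ge> 1" and M: "real M \<le> X"
  shows "norm (\<Sum>m\<in>{1..M div d^2}. e ((\<alpha> * real d ^ 4) * (of_nat m)^2))
    \<le> 6 * (sqrt X)^2 / (real q powr (1/4))^2 + 6 * sqrt X * (ln (real q) powr (1/4))^2 / real d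
       + 4 * (real q powr (1/4))^2 * (ln (real q) powr (1/4))^2"
proof -
  define u where "u = real q powr (1/4)"
  define v where "v = ln (real q) powr (1/4)"
  define w where "w = sqrt X"
  define N where "N = M div d^2"
  define L where "L = ln (real q)"
  define t where "t = norm (\<Sum>m\<in>{1..N}. e ((\<alpha> * real d ^ 4) * (of_nat m)^2))"
  have X0: "X \<ge> 0" using M by linarith
  have qpos: "real q > 0" using q by simp
  have Lpos: "L > 0" unfolding L_def using q by simp
  have u4: "u^4 = real q" and upos: "u > 0" unfolding u_def using qroot_facts[OF qpos] by auto
  have v4: "v^4 = L" and vpos: "v > 0" unfolding v_def L_def using qroot_facts[of "ln (real q)"] Lpos
    by (auto simp: L_def)
  have w2: "w^2 = X" and w0: "w \<ge> 0" unfolding w_def using X0 by auto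
  have dpos: "real d > 0" using d by simp
  have Nd: "real N * real d ^ 2 \<le> X"
  proof -
    have "N * d^2 \<le> M" unfolding N_def by (rule div_times_less_eq_dividend)
    hence "real N * real d ^ 2 \<le> real M" by (metis of_nat_le_iff of_nat_mult of_nat_power)
    thus ?thesis using M by linarith
  qed
  have T: "t^2 \<le> 32 * X^2 / real q + 26 * real N * L + 16 * real q * L"
    unfolding t_def L_def by (rule T_bound[OF q cop \<alpha> \<beta> d Nd])
  define A where "A = 6 * w^2 / u^2"
  define B where "B = 6 * w * v^2 / real d"
  define C where "C = 4 * u^2 * v^2"
  have A0: "A \<ge> 0" and B0: "B \<ge> 0" and C0: "C \<ge> 0" unfolding A_def B_def C_def using w0 dpos by auto
  have A2: "32 * X^2 / real q \<le> A^2"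
  proof -
    have "A^2 = 36 * (w^2)^2 / u^4" unfolding A_def by (simp add: power2_eq_square power4_eq_xxxx field_simps)
    also have "\<dots> = 36 * X^2 / real q" using w2 u4 by simp
    finally show ?thesis using qpos by (simp add: divide_right_mono)
  qed
  have B2: "26 * real N * L \<le> B^2"
  proof -
    have "B^2 = 36 * w^2 * v^4 / (real d)^2" unfolding B_def by (simp add: power2_eq_square power4_eq_xxxx field_simps)
    also have "\<dots> = 36 * X * L / (real d)^2" using w2 v4 by simp
    finally have Bq: "B^2 = 36 * X * L / (real d)^2" .
    have "real N \<le> X / (real d)^2" using Nd dpos by (simp add: field_simps)
    hence "26 * real N * L \<le> 26 * (X / (real d)^2) * L" using Lpos by (intro mult_right_mono) auto
    also have "\<dots> \<le> 36 * X * L / (real d)^2" using X0 Lpos dpos by (simp add: divide_right_mono)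
    finally show ?thesis using Bq by simp
  qed
  have C2: "16 * real q * L = C^2"
  proof -
    have "C^2 = 16 * u^4 * v^4" unfolding C_def by (simp add: power2_eq_square power4_eq_xxxx field_simps)
    thus ?thesis using u4 v4 by simp
  qed
  have "t^2 \<le> A^2 + B^2 + C^2" using T A2 B2 C2 by linarith
  also have "\<dots> \<le> (A + B + C)^2"
  proof -
    have e: "(A + B + C)^2 = A^2 + B^2 + 2 * A * B + C^2 + 2 * (A + B) * C" by (simp only: power2_sum)
    have "0 \<le> 2 * A * B" "0 \<le> 2 * (A + B) * C" using A0 B0 C0 by simp_all
    thus ?thesis using e by linarith
  qed
  finally have sq: "t^2 \<le> (A + B + C)^2" .
  have "t \<le> A + B + C" by (rule power2_le_imp_le[OF sq]) (use A0 B0 C0 in linarith)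
  thus ?thesis unfolding t_def A_def B_def C_def u_def v_def w_def N_def .
qed

lemma tail_sum:
  fixes D0 M :: nat assumes D0: "D0 \<ge> 1"
  shows "(\<Sum>d\<in>{1..M}. if D0 < d then 1 / (real d)^2 else 0) \<le> 1 / real D0"
proof -
  have main: "(\<Sum>d\<in>{1..D0 + k}. if D0 < d then 1 / (real d)^2 else 0) \<le> 1 / real D0 - 1 / real (D0 + k)" for k
  proof (induction k)
    case 0
    have "(\<Sum>d\<in>{1..D0}. if D0 < d then 1 / (real d)^2 else 0) = 0" by (intro sum.neutral) auto
    thus ?case by simp
  next
    case (Suc k)
    define n where "n = D0 + k"
    have npos: "real n > 0" using D0 unfolding n_def by simp
    have "(\<Sum>d\<in>{1..D0 + Suc k}. if D0 < d then 1 / (real d)^2 else 0)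
        = (\<Sum>d\<in>{1..D0 + k}. if D0 < d then 1 / (real d)^2 else 0) + 1 / (real (Suc n))^2"
      unfolding n_def by simp
    also have "1 / (real (Suc n))^2 \<le> 1 / real n - 1 / real (Suc n)"
    proof -
      have e1: "1 / real n - 1 / real (Suc n) = 1 / (real n * real (Suc n))" using npos by (simp add: field_simps)
      have "real n * real (Suc n) \<le> (real (Suc n))^2" by (simp add: power2_eq_square)
      hence "1 / (real (Suc n))^2 \<le> 1 / (real n * real (Suc n))"
        using npos by (intro divide_left_mono mult_pos_pos) auto
      thus ?thesis using e1 by simp
    qed
    finally show ?case using Suc.IH unfolding n_def by simp
  qed
  show ?thesis
  proof (cases "M \<le> D0")
    case True
    have "(\<Sum>d\<in>{1..M}. if D0 < d then 1 / (real d)^2 else 0) = 0" using True by (intro sum.neutral) auto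
    thus ?thesis by simp
  next
    case False
    then obtain k where k: "M = D0 + k" by (metis le_add_diff_inverse nat_le_linear)
    have "1 / real (D0 + k) \<ge> 0" by simp
    thus ?thesis using main[of k] unfolding k by linarith
  qed
qed

lemma abs_mu: "\<bar>moebius_mu n\<bar> \<le> 1"
  unfolding moebius_mu_def by (auto simp: power_abs)

lemma ln2_half: "ln (2::real) \<ge> 1/2"
proof -
  have "exp (1/2::real) ^ 2 = exp 1" by (simp add: exp_double[symmetric])
  also have "\<dots> \<le> 2 ^ 2" using exp_le by simp
  finally have "exp (1/2::real) \<le> 2" by (rule power2_le_imp_le) simp
  thus ?thesis by (metis ln_exp ln_le_cancel_iff exp_gt_zero zero_less_numeral)
qed

lemma count_sum:
  fixes K :: real and M D0 :: nat assumes "K \<ge> 0"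
  shows "(\<Sum>d\<in>{1..M}. if d \<le> D0 then K else 0) \<le> real D0 * K"
proof -
  have "(\<Sum>d\<in>{1..M}. if d \<le> D0 then K else 0) = (\<Sum>d\<in>{d\<in>{1..M}. d \<le> D0}. K)"
    by (rule sum.inter_filter[symmetric]) simp
  also have "\<dots> = real (card {d\<in>{1..M}. d \<le> D0}) * K" by simp
  also have "card {d\<in>{1..M}. d \<le> D0} \<le> card {1..D0}" by (intro card_mono) auto
  hence "real (card {d\<in>{1..M}. d \<le> D0}) * K \<le> real D0 * K" using assms
    by (intro mult_right_mono) auto
  finally show ?thesis .
qed

lemma triv_bound:
  fixes \<alpha> X :: real assumes X: "X \<ge> 0"
  shows "norm (\<Sum>n\<in>{1..nat \<lfloor>X\<rfloor>}. of_int ((moebius_mu n)^2) * e (\<alpha> * (of_nat n)^2)) \<le> X"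
proof -
  have "norm (\<Sum>n\<in>{1..nat \<lfloor>X\<rfloor>}. of_int ((moebius_mu n)^2) * e (\<alpha> * (of_nat n)^2))
      \<le> (\<Sum>n\<in>{1..nat \<lfloor>X\<rfloor>}. norm (of_int ((moebius_mu n)^2) * e (\<alpha> * (of_nat n)^2) :: complex))"
    by (rule norm_sum)
  also have "\<dots> \<le> (\<Sum>n\<in>{1..nat \<lfloor>X\<rfloor>}. 1)"
  proof (rule sum_mono)
    fix n
    have "\<bar>moebius_mu n\<bar> \<le> 1" by (rule abs_mu)
    hence "\<bar>moebius_mu n\<bar> * \<bar>moebius_mu n\<bar> \<le> 1" by (intro mult_le_one) auto
    hence "\<bar>(moebius_mu n)^2\<bar> \<le> 1" by (simp only: power2_eq_square abs_mult)
    hence "\<bar>real_of_int ((moebius_mu n)^2)\<bar> \<le> 1" by (metis of_int_abs of_int_le_1_iff)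
    thus "norm (of_int ((moebius_mu n)^2) * e (\<alpha> * (of_nat n)^2) :: complex) \<le> 1"
      by (simp add: norm_mult del: of_int_power)
  qed
  also have "\<dots> = real (nat \<lfloor>X\<rfloor>)" by simp
  also have "\<dots> \<le> X" using X by linarith
  finally show ?thesis .
qed

lemma S_bound:
  fixes \<alpha> \<beta> X :: real and a :: int and q D0 :: nat
  assumes q: "q \<ge> 2" and cop: "coprime a (int q)" and \<alpha>: "\<alpha> = of_int a / of_nat q + \<beta>"
    and \<beta>: "\<bar>\<beta>\<bar> < 1 / (of_nat q)^2" and X: "X \<ge> 2" and D0: "D0 \<ge> 1"
  shows "norm (\<Sum>n\<in>{1..nat \<lfloor>X\<rfloor>}. of_int ((moebius_mu n)^2) * e (\<alpha> * (of_nat n)^2))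
    \<le> X / real D0 + real D0 * (6 * (sqrt X)^2 / (real q powr (1/4))^2 + 4 * (real q powr (1/4))^2 * (ln (real q) powr (1/4))^2)
       + 18 * sqrt X * (ln (real q) powr (1/4))^2 * ln X"
proof -
  define M where "M = nat \<lfloor>X\<rfloor>"
  define A where "A = 6 * (sqrt X)^2 / (real q powr (1/4))^2"
  define C where "C = 4 * (real q powr (1/4))^2 * (ln (real q) powr (1/4))^2"
  define B0 where "B0 = 6 * sqrt X * (ln (real q) powr (1/4))^2"
  define T where "T = (\<lambda>d. \<Sum>m\<in>{1..M div d^2}. e ((\<alpha> * real d ^ 4) * (of_nat m)^2))"
  have MX: "real M \<le> X" unfolding M_def using X by linarith
  have M2: "M \<ge> 2" unfolding M_def using X by linarith
  have A0: "A \<ge> 0" and C0: "C \<ge> 0" and B00: "B0 \<ge> 0" unfolding A_def C_def B0_def using X by auto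
  have S: "(\<Sum>n\<in>{1..M}. of_int ((moebius_mu n)^2) * e (\<alpha> * (of_nat n)^2))
      = (\<Sum>d\<in>{1..M}. of_int (moebius_mu d) * T d)"
  proof -
    have "(\<Sum>n\<in>{1..M}. of_int ((moebius_mu n)^2) * e (\<alpha> * (of_nat n)^2))
       = (\<Sum>d\<in>{1..M}. of_int (moebius_mu d) * (\<Sum>m\<in>{1..M div d^2}. e (\<alpha> * (of_nat (d^2 * m))^2)))"
      by (rule decomp)
    also have "\<dots> = (\<Sum>d\<in>{1..M}. of_int (moebius_mu d) * T d)"
      unfolding T_def by (intro sum.cong refl arg_cong2[where f="(*)"]) (simp add: power_mult_distrib algebra_simps flip: power_mult)
    finally show ?thesis .
  qed
  have gd: "norm (T d) \<le> (if d \<le> D0 then A + C else 0) + B0 * (1 / real d) + X * (if D0 < d then 1 / (real d)^2 else 0)"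
    if d: "d \<in> {1..M}" for d
  proof (cases "d \<le> D0")
    case True
    have "norm (T d) \<le> A + B0 / real d + C" unfolding T_def A_def B0_def C_def
      using Td_bound[OF q cop \<alpha> \<beta> _ MX, of d] d by simp
    thus ?thesis using True by simp
  next
    case False
    have "norm (T d) \<le> (\<Sum>m\<in>{1..M div d^2}. norm (e ((\<alpha> * real d ^ 4) * (of_nat m)^2)))"
      unfolding T_def by (rule norm_sum)
    also have "\<dots> = real (M div d^2)" by simp
    also have "real (M div d^2) \<le> X / (real d)^2"
    proof -
      have "M div d^2 * d^2 \<le> M" by (rule div_times_less_eq_dividend)
      hence "real (M div d^2) * (real d)^2 \<le> real M" by (metis of_nat_le_iff of_nat_mult of_nat_power)
      thus ?thesis using MX d by (simp add: field_simps)
    qed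
    finally have "norm (T d) \<le> X * (1 / (real d)^2)" by simp
    moreover have "B0 * (1 / real d) \<ge> 0" using B00 d by simp
    ultimately show ?thesis using False by simp
  qed
  have "norm (\<Sum>d\<in>{1..M}. of_int (moebius_mu d) * T d) \<le> (\<Sum>d\<in>{1..M}. norm (of_int (moebius_mu d) * T d))"
    by (rule norm_sum)
  also have "\<dots> \<le> (\<Sum>d\<in>{1..M}. (if d \<le> D0 then A + C else 0) + B0 * (1 / real d) + X * (if D0 < d then 1 / (real d)^2 else 0))"
  proof (rule sum_mono)
    fix d assume d: "d \<in> {1..M}"
    have "norm (of_int (moebius_mu d) * T d) = \<bar>real_of_int (moebius_mu d)\<bar> * norm (T d)"
      by (simp add: norm_mult)
    also have "\<dots> \<le> 1 * norm (T d)"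
      using abs_mu[of d] by (intro mult_right_mono) (auto simp flip: of_int_abs)
    also have "\<dots> \<le> (if d \<le> D0 then A + C else 0) + B0 * (1 / real d) + X * (if D0 < d then 1 / (real d)^2 else 0)"
      using gd[OF d] by simp
    finally show "norm (of_int (moebius_mu d) * T d) \<le> (if d \<le> D0 then A + C else 0) + B0 * (1 / real d) + X * (if D0 < d then 1 / (real d)^2 else 0)" .
  qed
  also have "\<dots> = (\<Sum>d\<in>{1..M}. if d \<le> D0 then A + C else 0) + B0 * H M + X * (\<Sum>d\<in>{1..M}. if D0 < d then 1 / (real d)^2 else 0)"
    by (simp add: sum.distrib sum_distrib_left H_def)
  also have "(\<Sum>d\<in>{1..M}. if d \<le> D0 then A + C else 0) \<le> real D0 * (A + C)"
    using A0 C0 by (intro count_sum) simp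
  also have "X * (\<Sum>d\<in>{1..M}. if D0 < d then 1 / (real d)^2 else 0) \<le> X * (1 / real D0)"
    using X tail_sum[OF D0, of M] by (intro mult_left_mono) auto
  also have "B0 * H M \<le> B0 * (3 * ln X)"
  proof -
    have "H M \<le> 1 + ln (real M)" by (rule H_le)
    also have "ln (real M) \<le> ln X" using M2 MX by simp
    also have "1 \<le> 2 * ln X"
    proof -
      have "ln (2::real) \<le> ln X" using X by simp
      thus ?thesis using ln2_half by linarith
    qed
    hence "1 + ln X \<le> 3 * ln X" by linarith
    finally show ?thesis using B00 by (intro mult_left_mono) auto
  qed
  finally have "norm (\<Sum>d\<in>{1..M}. of_int (moebius_mu d) * T d) \<le> real D0 * (A + C) + B0 * (3 * ln X) + X * (1 / real D0)"
    by simp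
  moreover have "real D0 * (A + C) + B0 * (3 * ln X) + X * (1 / real D0)
      = X / real D0 + real D0 * (A + C) + 18 * sqrt X * (ln (real q) powr (1/4))^2 * ln X"
    unfolding B0_def by (simp add: algebra_simps)
  ultimately have "norm (\<Sum>d\<in>{1..M}. of_int (moebius_mu d) * T d)
      \<le> X / real D0 + real D0 * (A + C) + 18 * sqrt X * (ln (real q) powr (1/4))^2 * ln X" by linarith
  thus ?thesis unfolding M_def[symmetric] S A_def[symmetric] C_def[symmetric] .
qed

lemma floor_half:
  fixes y :: real assumes "y \<ge> 1"
  shows "nat \<lfloor>y\<rfloor> \<ge> 1" "real (nat \<lfloor>y\<rfloor>) \<le> y" "y \<le> 2 * real (nat \<lfloor>y\<rfloor>)"
proof -
  have f1: "\<lfloor>y\<rfloor> \<ge> 1" using assms by simp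
  have r: "real (nat \<lfloor>y\<rfloor>) = of_int \<lfloor>y\<rfloor>" using f1 by simp
  show "nat \<lfloor>y\<rfloor> \<ge> 1" using nat_mono[OF f1] by simp
  show "real (nat \<lfloor>y\<rfloor>) \<le> y" using r by simp
  have "y < of_int \<lfloor>y\<rfloor> + 1" by linarith
  moreover have "(1::real) \<le> of_int \<lfloor>y\<rfloor>" using f1 by simp
  ultimately show "y \<le> 2 * real (nat \<lfloor>y\<rfloor>)" using r by linarith
qed

theorem theorem1p11:
  shows "\<exists>C>0. \<forall>(a::int) (q::nat) (\<beta>::real) (\<alpha>::real) (X::real).
     q \<ge> 1 \<and> coprime a (int q) \<and> \<alpha> = of_int a / of_nat q + \<beta> \<and>
     \<bar>\<beta>\<bar> < 1 / (of_nat q)^2 \<and> X \<ge> 2 \<longrightarrow>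
     norm (\<Sum>n\<in>{1..nat \<lfloor>X\<rfloor>}. of_int ((moebius_mu n)^2) * e (\<alpha> * (of_nat n)^2))
       \<le> C * (X / (of_nat q) powr (1/4)
              + sqrt X * ln X * sqrt (ln (of_nat q))
              + sqrt X * (of_nat q) powr (1/4) * (ln (of_nat q)) powr (1/4))"
proof (intro exI[of _ 18] conjI allI impI)
  show "(18::real) > 0" by simp
  fix a :: int and q :: nat and \<beta> \<alpha> X :: real
  assume H: "q \<ge> 1 \<and> coprime a (int q) \<and> \<alpha> = of_int a / of_nat q + \<beta> \<and>
     \<bar>\<beta>\<bar> < 1 / (of_nat q)^2 \<and> X \<ge> 2"
  hence q1: "q \<ge> 1" and cop: "coprime a (int q)" and \<alpha>: "\<alpha> = of_int a / of_nat q + \<beta>"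
    and \<beta>: "\<bar>\<beta>\<bar> < 1 / (of_nat q)^2" and X: "X \<ge> 2" by auto
  define S where "S = norm (\<Sum>n\<in>{1..nat \<lfloor>X\<rfloor>}. of_int ((moebius_mu n)^2) * e (\<alpha> * (of_nat n)^2))"
  have triv: "S \<le> X" unfolding S_def using X by (intro triv_bound) simp
  show "S \<le> 18 * (X / (of_nat q) powr (1/4)
              + sqrt X * ln X * sqrt (ln (of_nat q))
              + sqrt X * (of_nat q) powr (1/4) * (ln (of_nat q)) powr (1/4))"
  proof (cases "q = 1")
    case True
    then show ?thesis using triv X by simp
  next
    case False
    hence q: "q \<ge> 2" using q1 by simp
    have qpos: "real q > 0" using q by simp
    define L where "L = ln (real q)"
    have Lpos: "L > 0" unfolding L_def using q by simp
    define u where "u = real q powr (1/4)"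
    define v where "v = L powr (1/4)"
    define w where "w = sqrt X"
    have u4: "u^4 = real q" and upos: "u > 0" unfolding u_def using qroot_facts[OF qpos] by auto
    have v4: "v^4 = L" and vpos: "v > 0" and sL: "sqrt L = v^2"
      unfolding v_def using qroot_facts[OF Lpos] by auto
    have w2: "w^2 = X" and wpos: "w > 0" unfolding w_def using X by auto
    have lnX: "ln X \<ge> 0" using X by simp
    have u1: "u \<ge> 1"
    proof (rule ccontr)
      assume "\<not> u \<ge> 1"
      hence "u^4 < 1" using upos by (simp add: power_less_one_iff)
      thus False using u4 q by simp
    qed
    define T1 where "T1 = X / u"
    define T2 where "T2 = w * ln X * v^2"
    define T3 where "T3 = w * u * v"
    have T10: "T1 \<ge> 0" unfolding T1_def using X upos by simp
    have T20: "T2 \<ge> 0" unfolding T2_def using wpos lnX by simp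
    have T30: "T3 \<ge> 0" unfolding T3_def using wpos upos vpos by simp
    have goal_eq: "X / (of_nat q) powr (1/4) + sqrt X * ln X * sqrt (ln (of_nat q))
              + sqrt X * (of_nat q) powr (1/4) * (ln (of_nat q)) powr (1/4) = T1 + T2 + T3"
      unfolding T1_def T2_def T3_def u_def v_def w_def L_def[symmetric] sL by simp
    have SB: "S \<le> X / real D0 + real D0 * (6 * w^2 / u^2 + 4 * u^2 * v^2) + 18 * T2" if D0: "D0 \<ge> 1" for D0
    proof -
      have "S \<le> X / real D0 + real D0 * (6 * (sqrt X)^2 / (real q powr (1/4))^2 + 4 * (real q powr (1/4))^2 * (ln (real q) powr (1/4))^2)
       + 18 * sqrt X * (ln (real q) powr (1/4))^2 * ln X"
        unfolding S_def by (rule S_bound[OF q cop \<alpha> \<beta> X D0])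
      also have "18 * sqrt X * (ln (real q) powr (1/4))^2 * ln X = 18 * T2"
        unfolding T2_def w_def v_def L_def by simp
      finally show ?thesis unfolding u_def v_def w_def L_def by simp
    qed
    have "S \<le> 18 * (T1 + T2 + T3)"
    proof (cases "u^4 * v^2 \<le> w^2")
      case True
      define D0 where "D0 = nat \<lfloor>u\<rfloor>"
      have D01: "D0 \<ge> 1" and D0u: "real D0 \<le> u" and uD0: "u \<le> 2 * real D0"
        unfolding D0_def using floor_half[OF u1] by auto
      have D0pos: "real D0 > 0" using D01 by simp
      have a1: "X / real D0 \<le> 2 * T1"
      proof -
        have "X / real D0 \<le> X / (u / 2)" using uD0 upos X by (intro divide_left_mono) auto
        also have "X / (u / 2) = 2 * (X / u)" using upos by simp
        finally show ?thesis unfolding T1_def .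
      qed
      have a2: "real D0 * (6 * w^2 / u^2) \<le> 6 * T1"
      proof -
        have "real D0 * (6 * w^2 / u^2) \<le> u * (6 * w^2 / u^2)" using D0u by (intro mult_right_mono) auto
        also have "\<dots> = 6 * X / u" using upos w2 by (simp add: power2_eq_square field_simps)
        finally show ?thesis unfolding T1_def by simp
      qed
      have a3: "real D0 * (4 * u^2 * v^2) \<le> 4 * T3"
      proof -
        have s1: "real D0 * (4 * u^2 * v^2) \<le> u * (4 * u^2 * v^2)" using D0u by (intro mult_right_mono) auto
        have e1: "(u^2 * v)^2 = u^4 * v^2" by (simp add: power_mult_distrib power_mult[symmetric])
        have s2: "(u^2 * v)^2 \<le> w^2" using True e1 by simp
        have s3: "u^2 * v \<le> w" by (rule power2_le_imp_le[OF s2]) (use wpos in linarith)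
        have s4: "(u^2 * v) * (u * v) \<le> w * (u * v)" by (rule mult_right_mono[OF s3]) (use upos vpos in simp)
        have e2: "u * (4 * u^2 * v^2) = 4 * ((u^2 * v) * (u * v))" by algebra
        have e3: "w * (u * v) = w * u * v" by (simp add: mult.assoc)
        show ?thesis unfolding T3_def using s1 s4 e2 e3 by linarith
      qed
      have "S \<le> X / real D0 + real D0 * (6 * w^2 / u^2 + 4 * u^2 * v^2) + 18 * T2" by (rule SB[OF D01])
      also have "\<dots> = X / real D0 + real D0 * (6 * w^2 / u^2) + real D0 * (4 * u^2 * v^2) + 18 * T2"
        by (simp add: algebra_simps)
      also have "\<dots> \<le> 2 * T1 + 6 * T1 + 4 * T3 + 18 * T2"
        using a1 a2 a3 by (intro add_mono order_refl)
      finally show ?thesis using T10 T20 T30 unfolding distrib_left by linarith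
    next
      case notA: False
      show ?thesis
      proof (cases "u * v \<le> w")
        case True
        define D where "D = w / (u * v)"
        have D1: "D \<ge> 1" unfolding D_def using True upos vpos by (simp add: field_simps)
        define D0 where "D0 = nat \<lfloor>D\<rfloor>"
        have D01: "D0 \<ge> 1" and D0D: "real D0 \<le> D" and DD0: "D \<le> 2 * real D0"
          unfolding D0_def using floor_half[OF D1] by auto
        have uv: "u * v > 0" using upos vpos by simp
        have b1: "X / real D0 \<le> 2 * T3"
        proof -
          have "X / real D0 \<le> X / (D / 2)" using DD0 D1 X by (intro divide_left_mono) auto
          also have "\<dots> = 2 * (w * u * v)" unfolding D_def using w2 wpos uv
            by (simp add: power2_eq_square field_simps)
          finally show ?thesis unfolding T3_def .
        qed
        have b2: "real D0 * (6 * w^2 / u^2) \<le> 6 * T3"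
        proof -
          have "real D0 * (6 * w^2 / u^2) \<le> D * (6 * w^2 / u^2)" using D0D by (intro mult_right_mono) auto
          also have "\<dots> = 6 * (w^2 * w) / (u^3 * v)" unfolding D_def using upos vpos
            by (simp add: power2_eq_square power3_eq_cube field_simps)
          also have "w^2 * w \<le> (u^4 * v^2) * w" using notA wpos by (intro mult_right_mono) auto
          hence "6 * (w^2 * w) / (u^3 * v) \<le> 6 * ((u^4 * v^2) * w) / (u^3 * v)"
            using upos vpos by (intro divide_right_mono) auto
          also have "6 * ((u^4 * v^2) * w) / (u^3 * v) = 6 * (w * u * v)" using upos vpos
            by (simp add: power2_eq_square power3_eq_cube power4_eq_xxxx field_simps)
          finally show ?thesis unfolding T3_def .
        qed
        have b3: "real D0 * (4 * u^2 * v^2) \<le> 4 * T3"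
        proof -
          have "real D0 * (4 * u^2 * v^2) \<le> D * (4 * u^2 * v^2)" using D0D by (intro mult_right_mono) auto
          also have "\<dots> = 4 * (w * u * v)" unfolding D_def using upos vpos
            by (simp add: power2_eq_square field_simps)
          finally show ?thesis unfolding T3_def .
        qed
        have "S \<le> X / real D0 + real D0 * (6 * w^2 / u^2 + 4 * u^2 * v^2) + 18 * T2" by (rule SB[OF D01])
        also have "\<dots> = X / real D0 + real D0 * (6 * w^2 / u^2) + real D0 * (4 * u^2 * v^2) + 18 * T2"
          by (simp add: algebra_simps)
        also have "\<dots> \<le> 2 * T3 + 6 * T3 + 4 * T3 + 18 * T2"
          using b1 b2 b3 by (intro add_mono order_refl)
        finally show ?thesis using T10 T20 T30 unfolding distrib_left by linarith
      next
        case False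
        have "X = w * w" using w2 by (simp add: power2_eq_square)
        also have "\<dots> \<le> w * (u * v)" using False wpos by (intro mult_left_mono) auto
        finally have "X \<le> T3" unfolding T3_def by (simp add: algebra_simps)
        thus ?thesis using triv T10 T20 T30 unfolding distrib_left by linarith
      qed
    qed
    thus ?thesis using goal_eq by simp
  qed
qed

end
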